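(* Let $c,M\in\mathbb{N}$ with $c,M\ge1$, and let $B_{c,M}=(n_B)_{n\ge0}$ be the periodic sequence defined by $n_B=c$ if $n\ge1$ and $M\mid n$, and $n_B=1$ otherwise (in particular $0_B=1$). Then $B_{c,M}$ is a cobweb tiling sequence.
   Context: Notation: $n_F\equiv F_n$. A sequence $F=(n_F)_{n\ge0}$ of natural numbers with $0_F=1$ is cobweb-admissible iff every $F$-nomial coefficient $\binom{n}{k}_F=\frac{n_F(n-1)_F\cdots(n-k+1)_F}{1_F2_F\cdots k_F}$, $0\le k\le n$, is a nonnegative integer. The cobweb poset of $F$ has, for each $s\ge1$, a level $\Phi_s$ consisting of $s_F$ distinct vertices (levels pairwise disjoint), plus a root level $\Phi_0$ with one vertex; for $x\in\Phi_i$, $y\in\Phi_j$ one has $x<y$ iff $i<j$. For $1\le a\le b$, the layer $\langle\Phi_a\to\Phi_b\rangle$ is the subposet on $\Phi_a\cup\dots\cup\Phi_b$; it has $m=b-a+1$ levels and its maximal chains form the set $\Phi_a\times\dots\times\Phi_b$. For a permutation $\sigma$ of $\{1,\dots,m\}$, a block of type $\sigma P_m$ in this layer is the subposet induced on $V_a\cup\dots\cup V_b$ where $V_{a-1+i}\subseteq\Phi_{a-1+i}$ and $|V_{a-1+i}|=\sigma(i)_F$ for $i=1,\dots,m$; its maximal chains form the set $V_a\times\dots\times V_b$. A tiling of the layer is a finite family of such blocks ($\sigma$ may vary from block to block) whose sets $V_a\times\dots\times V_b$ partition $\Phi_a\times\dots\times\Phi_b$ (pairwise max-disjoint and covering all maximal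 chains). A cobweb tiling sequence is a cobweb-admissible sequence $F$ such that for all $1\le a\le b$ the layer $\langle\Phi_a\to\Phi_b\rangle$ admits a tiling by blocks of type $\sigma P_{b-a+1}$. *)

theory Defs
  imports "HOL-Library.FuncSet"
begin

definition fnom_num :: "(nat \<Rightarrow> nat) \<Rightarrow> nat \<Rightarrow> nat \<Rightarrow> nat" where
  "fnom_num F n k = (\<Prod>i<k. F (n - i))"

definition fnom_den :: "(nat \<Rightarrow> nat) \<Rightarrow> nat \<Rightarrow> nat" where
  "fnom_den F k = (\<Prod>i\<in>{1..k}. F i)"

definition cobweb_admissible :: "(nat \<Rightarrow> nat) \<Rightarrow> bool" where
  "cobweb_admissible F \<longleftrightarrow> F 0 = 1 \<and>
     (\<forall>n k. k \<le> n \<longrightarrow> fnom_den F k \<noteq> 0 \<and> fnom_den F k dvd fnom_num F n k)"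

text \<open>Level s of the cobweb poset is represented by the vertex labels {..<F s}
  (vertex (s,j)). A maximal chain of the layer from level a to level b is a choice
  of one vertex in each level a..b, i.e. an element of the extensional product.\<close>
definition layer_chains :: "(nat \<Rightarrow> nat) \<Rightarrow> nat \<Rightarrow> nat \<Rightarrow> (nat \<Rightarrow> nat) set" where
  "layer_chains F a b = PiE {a..b} (\<lambda>s. {..<F s})"

definition is_block :: "(nat \<Rightarrow> nat) \<Rightarrow> nat \<Rightarrow> nat \<Rightarrow> (nat \<Rightarrow> nat) \<Rightarrow> (nat \<Rightarrow> nat set) \<Rightarrow> bool" where
  "is_block F a b \<sigma> V \<longleftrightarrow>
     bij_betw \<sigma> {1..b - a + 1} {1..b - a + 1} \<and>
     (\<forall>i\<in>{1..b - a + 1}. V (a - 1 + i) \<subseteq> {..<F (a - 1 + i)} \<and>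
                           finite (V (a - 1 + i)) \<and>
                           card (V (a - 1 + i)) = F (\<sigma> i))"

definition block_chains :: "nat \<Rightarrow> nat \<Rightarrow> (nat \<Rightarrow> nat set) \<Rightarrow> (nat \<Rightarrow> nat) set" where
  "block_chains a b V = PiE {a..b} V"

definition layer_tiling :: "(nat \<Rightarrow> nat) \<Rightarrow> nat \<Rightarrow> nat \<Rightarrow> (nat \<Rightarrow> nat set) set \<Rightarrow> bool" where
  "layer_tiling F a b T \<longleftrightarrow> finite T \<and>
     (\<forall>V\<in>T. \<exists>\<sigma>. is_block F a b \<sigma> V) \<and>
     (\<forall>V\<in>T. \<forall>W\<in>T. V \<noteq> W \<longrightarrow> block_chains a b V \<inter> block_chains a b W = {}) \<and>
     (\<Union>V\<in>T. block_chains a b V) = layer_chains F a b"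

definition cobweb_tiling_sequence :: "(nat \<Rightarrow> nat) \<Rightarrow> bool" where
  "cobweb_tiling_sequence F \<longleftrightarrow> cobweb_admissible F \<and>
     (\<forall>a b. 1 \<le> a \<and> a \<le> b \<longrightarrow> (\<exists>T. layer_tiling F a b T))"

definition Bseq :: "nat \<Rightarrow> nat \<Rightarrow> nat \<Rightarrow> nat" where
  "Bseq c M n = (if n \<ge> 1 \<and> M dvd n then c else 1)"

end

theory Submission
  imports Defs
begin

lemma prod_if_pow:
  assumes "finite A"
  shows "(\<Prod>x\<in>A. (if P x then (c::nat) else 1)) = c ^ card {x\<in>A. P x}"
proof -
  have "(\<Prod>x\<in>A. (if P x then (c::nat) else 1)) = (\<Prod>x\<in>A \<inter> {x. P x}. c) * (\<Prod>x\<in>A \<inter> - {x. P x}. 1)"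
    using assms by (rule prod.If_cases)
  also have "\<dots> = c ^ card (A \<inter> {x. P x})" by simp
  also have "A \<inter> {x. P x} = {x\<in>A. P x}" by auto
  finally show ?thesis .
qed

lemma card_mult_upper:
  fixes M m :: nat
  assumes "M \<ge> 1"
  shows "card {i\<in>{1..m}. M dvd i} \<le> m div M"
proof -
  have "{i\<in>{1..m}. M dvd i} \<subseteq> (\<lambda>j. M*j) ` {1..m div M}"
  proof
    fix i assume "i \<in> {i\<in>{1..m}. M dvd i}"
    then obtain j where i: "i = M*j" "1 \<le> i" "i \<le> m" by auto
    have "j \<ge> 1" using i by (cases j) auto
    moreover have "j \<le> m div M" using i assms
      by (metis div_le_mono nonzero_mult_div_cancel_left not_one_le_zero)
    ultimately show "i \<in> (\<lambda>j. M*j) ` {1..m div M}" using i by auto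
  qed
  hence "card {i\<in>{1..m}. M dvd i} \<le> card ((\<lambda>j. M*j) ` {1..m div M})"
    by (intro card_mono) auto
  also have "\<dots> \<le> card {1..m div M}" by (rule card_image_le) auto
  finally show ?thesis by simp
qed

lemma card_mult_lower:
  fixes M m lo :: nat
  assumes "M \<ge> 1"
  shows "m div M \<le> card {s\<in>{lo..<lo+m}. M dvd s}"
proof -
  define q where "q = (lo + M - 1) div M"
  have q1: "M * q \<ge> lo"
  proof -
    have "M * q = lo + M - 1 - (lo + M - 1) mod M" unfolding q_def
      by (metis minus_mod_eq_mult_div)
    moreover have "(lo + M - 1) mod M \<le> M - 1" using assms
      by (metis One_nat_def Suc_pred le_simps(2) less_one mod_less_divisor not_le)
    ultimately show ?thesis using assms by linarith
  qed
  have q2: "M * q \<le> lo + M - 1" unfolding q_def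
    by (metis div_mult_self1_is_m le_refl mult.commute times_div_less_eq_dividend)
  have "(\<lambda>j. M*(q+j)) ` {0..<m div M} \<subseteq> {s\<in>{lo..<lo+m}. M dvd s}"
  proof
    fix s assume "s \<in> (\<lambda>j. M*(q+j)) ` {0..<m div M}"
    then obtain j where s: "s = M*(q+j)" "j < m div M"
      by (metis atLeastLessThan_iff imageE)
    have "Suc j \<le> m div M" using s by simp
    hence "M * Suc j \<le> M * (m div M)" by (rule mult_le_mono2)
    also have "\<dots> \<le> m" by simp
    finally have "M * j + M \<le> m" by simp
    moreover have "s = M*q + M*j" using s by (simp add: algebra_simps)
    ultimately show "s \<in> {s\<in>{lo..<lo+m}. M dvd s}" using q1 q2 assms s by auto
  qed
  hence "card ((\<lambda>j. M*(q+j)) ` {0..<m div M}) \<le> card {s\<in>{lo..<lo+m}. M dvd s}"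
    by (intro card_mono) auto
  moreover have "card ((\<lambda>j. M*(q+j)) ` {0..<m div M}) = m div M"
    using assms by (subst card_image) (auto simp: inj_on_def)
  ultimately show ?thesis by simp
qed

lemma admissible:
  fixes c M :: nat
  assumes "c \<ge> 1" and "M \<ge> 1"
  shows "cobweb_admissible (Bseq c M)"
  unfolding cobweb_admissible_def
proof (intro conjI allI impI)
  show "Bseq c M 0 = 1" by (simp add: Bseq_def)
  fix n k :: nat assume kn: "k \<le> n"
  have den: "fnom_den (Bseq c M) k = c ^ card {i\<in>{1..k}. 1 \<le> i \<and> M dvd i}"
    unfolding fnom_den_def Bseq_def by (rule prod_if_pow) simp
  have num: "fnom_num (Bseq c M) n k = c ^ card {i\<in>{..<k}. 1 \<le> n - i \<and> M dvd (n - i)}"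
    unfolding fnom_num_def Bseq_def by (rule prod_if_pow) simp
  show "fnom_den (Bseq c M) k \<noteq> 0" using den assms by simp
  have e1: "card {i\<in>{1..k}. 1 \<le> i \<and> M dvd i} \<le> k div M"
  proof -
    have "{i\<in>{1..k}. 1 \<le> i \<and> M dvd i} = {i\<in>{1..k}. M dvd i}" by auto
    thus ?thesis using card_mult_upper[OF assms(2)] by simp
  qed
  define A where "A = {i\<in>{..<k}. 1 \<le> n - i \<and> M dvd (n - i)}"
  have e2: "k div M \<le> card A"
  proof -
    have "k div M \<le> card {s\<in>{n+1-k..<n+1-k+k}. M dvd s}" by (rule card_mult_lower[OF assms(2)])
    also have "\<dots> \<le> card ((\<lambda>i. n - i) ` A)"
    proof (rule card_mono)
      show "finite ((\<lambda>i. n - i) ` A)" unfolding A_def by simp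
      show "{s\<in>{n+1-k..<n+1-k+k}. M dvd s} \<subseteq> (\<lambda>i. n - i) ` A"
      proof
        fix s assume s: "s \<in> {s\<in>{n+1-k..<n+1-k+k}. M dvd s}"
        hence "n - s \<in> A" "s = n - (n - s)" using kn unfolding A_def by auto
        thus "s \<in> (\<lambda>i. n - i) ` A" by (metis image_eqI)
      qed
    qed
    also have "\<dots> \<le> card A" unfolding A_def by (rule card_image_le) simp
    finally show ?thesis .
  qed
  show "fnom_den (Bseq c M) k dvd fnom_num (Bseq c M) n k"
    unfolding den num A_def[symmetric] using e1 e2 by (intro le_imp_power_dvd) simp
qed

lemma tiling:
  fixes c M a b :: nat
  assumes c1: "c \<ge> 1" and M1: "M \<ge> 1" and a1: "1 \<le> a" and ab: "a \<le> b"
  shows "\<exists>T. layer_tiling (Bseq c M) a b T"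
proof -
  define F where "F = Bseq c M"
  define m where "m = b - a + 1"
  define S where "S = {s\<in>{a..b}. M dvd s}"
  define Q where "Q = {i\<in>{1..m}. M dvd i}"
  have FS: "F s = c" if "s \<in> S" for s using that a1 unfolding F_def Bseq_def S_def by auto
  have FnS: "F s = 1" if "s \<in> {a..b}" "s \<notin> S" for s using that a1 unfolding F_def Bseq_def S_def by auto
  have "{a..b} = {a..<a+m}" unfolding m_def using ab by auto
  hence "card Q \<le> card S" using card_mult_upper[OF M1, of m] card_mult_lower[OF M1, of m a]
    unfolding Q_def S_def by simp
  then obtain P where P: "P \<subseteq> S" "card P = card Q" "finite P" by (rule obtain_subset_with_card_n)
  define R where "R = S - P"
  define P' where "P' = {i\<in>{1..m}. a - 1 + i \<in> P}"
  have "P = (\<lambda>i. a - 1 + i) ` P'"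
  proof
    show "P \<subseteq> (\<lambda>i. a - 1 + i) ` P'"
    proof
      fix s assume "s \<in> P"
      hence s: "s \<in> P" "a \<le> s" "s \<le> b" using P(1) unfolding S_def by auto
      hence "s - (a - 1) \<in> P'" "s = a - 1 + (s - (a - 1))" unfolding P'_def m_def using a1 by auto
      thus "s \<in> (\<lambda>i. a - 1 + i) ` P'" by (metis image_eqI)
    qed
  qed (auto simp: P'_def)
  hence "card P = card P'" by (metis card_image inj_on_def add_left_cancel)
  hence cPQ: "card P' = card Q" using P by simp
  have fin: "finite P'" "finite Q" unfolding P'_def Q_def by auto
  have sub: "P' \<subseteq> {1..m}" "Q \<subseteq> {1..m}" unfolding P'_def Q_def by auto
  obtain f1 where f1: "bij_betw f1 P' Q" using finite_same_card_bij[OF fin cPQ] by blast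
  have "card ({1..m} - P') = card ({1..m} - Q)"
    using cPQ sub fin by (simp add: card_Diff_subset)
  then obtain f2 where f2: "bij_betw f2 ({1..m} - P') ({1..m} - Q)"
    using finite_same_card_bij[of "{1..m} - P'" "{1..m} - Q"] by auto
  define \<sigma> where "\<sigma> i = (if i \<in> P' then f1 i else f2 i)" for i
  have b1: "bij_betw \<sigma> P' Q" using f1 by (rule bij_betw_cong[THEN iffD1, rotated]) (simp add: \<sigma>_def)
  have b2: "bij_betw \<sigma> ({1..m} - P') ({1..m} - Q)"
    using f2 by (rule bij_betw_cong[THEN iffD1, rotated]) (simp add: \<sigma>_def)
  have "bij_betw \<sigma> (P' \<union> ({1..m} - P')) (Q \<union> ({1..m} - Q))"
    by (rule bij_betw_combine[OF b1 b2]) auto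
  moreover have "P' \<union> ({1..m} - P') = {1..m}" "Q \<union> ({1..m} - Q) = {1..m}" using sub by auto
  ultimately have bs: "bij_betw \<sigma> {1..m} {1..m}" by simp
  have Fsig: "F (\<sigma> i) = (if a - 1 + i \<in> P then c else 1)" if "i \<in> {1..m}" for i
  proof (cases "i \<in> P'")
    case True
    hence "\<sigma> i \<in> Q" using b1 by (auto simp: bij_betw_def)
    thus ?thesis using True unfolding F_def Bseq_def Q_def P'_def by auto
  next
    case False
    hence "\<sigma> i \<in> {1..m} - Q" using b2 that by (auto simp: bij_betw_def)
    thus ?thesis using False that unfolding F_def Bseq_def Q_def P'_def by auto
  qed
  define V where "V g = (\<lambda>s. if s \<in> R then {g s} else {..<F s})" for g :: "nat \<Rightarrow> nat"
  define T where "T = V ` PiE R (\<lambda>s. {..<c})"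
  have finR: "finite R" unfolding R_def S_def by auto
  have RS: "R \<subseteq> {a..b}" unfolding R_def S_def by auto
  have Vsub: "V g s \<subseteq> {..<F s}" if "g \<in> PiE R (\<lambda>s. {..<c})" for g s
    using that FS unfolding V_def R_def by (auto simp: PiE_iff)
  have blk: "is_block F a b \<sigma> (V g)" if g: "g \<in> PiE R (\<lambda>s. {..<c})" for g
    unfolding is_block_def m_def[symmetric]
  proof (intro conjI ballI bs)
    fix i assume i: "i \<in> {1..m}"
    show "V g (a - 1 + i) \<subseteq> {..<F (a - 1 + i)}" using Vsub[OF g] .
    show "finite (V g (a - 1 + i))" unfolding V_def by auto
    have sab: "a - 1 + i \<in> {a..b}" using i a1 ab unfolding m_def by auto
    show "card (V g (a - 1 + i)) = F (\<sigma> i)"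
      unfolding Fsig[OF i] V_def using FS FnS[OF sab] P(1) sab unfolding R_def by auto
  qed
  have "layer_tiling F a b T"
    unfolding layer_tiling_def
  proof (intro conjI ballI impI)
    show "finite T" unfolding T_def using finR by (simp add: finite_PiE)
    fix X assume "X \<in> T"
    then obtain g where g: "g \<in> PiE R (\<lambda>s. {..<c})" "X = V g" unfolding T_def by blast
    show "\<exists>\<sigma>. is_block F a b \<sigma> X" using blk[OF g(1)] g(2) by blast
    fix Y assume "Y \<in> T" "X \<noteq> Y"
    then obtain h where h: "h \<in> PiE R (\<lambda>s. {..<c})" "Y = V h" unfolding T_def by blast
    have "g \<noteq> h" using g h \<open>X \<noteq> Y\<close> by auto
    then obtain s where s: "s \<in> R" "g s \<noteq> h s" using g(1) h(1) by (metis PiE_ext)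
    show "block_chains a b X \<inter> block_chains a b Y = {}"
    proof (rule ccontr)
      assume "block_chains a b X \<inter> block_chains a b Y \<noteq> {}"
      then obtain x where "x \<in> PiE {a..b} X" "x \<in> PiE {a..b} Y" unfolding block_chains_def by blast
      hence "x s \<in> X s" "x s \<in> Y s" using s RS by (auto simp: PiE_iff)
      thus False using s g(2) h(2) unfolding V_def by auto
    qed
  next
    show "(\<Union>V\<in>T. block_chains a b V) = layer_chains F a b"
    proof
      show "(\<Union>V\<in>T. block_chains a b V) \<subseteq> layer_chains F a b"
      proof
        fix x assume "x \<in> (\<Union>V\<in>T. block_chains a b V)"
        then obtain g where g: "g \<in> PiE R (\<lambda>s. {..<c})" "x \<in> PiE {a..b} (V g)"
          unfolding T_def block_chains_def by blast
        thus "x \<in> layer_chains F a b" unfolding layer_chains_def using Vsub[OF g(1)]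
          by (auto simp: PiE_iff)
      qed
    next
      show "layer_chains F a b \<subseteq> (\<Union>V\<in>T. block_chains a b V)"
      proof
        fix x assume x: "x \<in> layer_chains F a b"
        define g where "g = restrict x R"
        have g: "g \<in> PiE R (\<lambda>s. {..<c})" using x FS RS unfolding g_def layer_chains_def R_def
          by (auto simp: PiE_iff)
        have "x \<in> PiE {a..b} (V g)" using x unfolding layer_chains_def V_def g_def
          by (auto simp: PiE_iff)
        thus "x \<in> (\<Union>V\<in>T. block_chains a b V)" using g unfolding T_def block_chains_def by blast
      qed
    qed
  qed
  thus ?thesis unfolding F_def by blast
qed

theorem mainTheorem10:
  fixes c M :: nat
  assumes "c \<ge> 1" and "M \<ge> 1"
  shows "cobweb_tiling_sequence (Bseq c M)"
  unfolding cobweb_tiling_sequence_def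
  using admissible[OF assms] tiling[OF assms] by blast

end
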